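(* Let $n\ge d\ge1$ and suppose $P\subseteq\mathbb{R}^d$ is a grid set of size $\binom{n}{d}$. Then for every compact convex set $C\subseteq\mathbb{R}^d$, \[ |\partial C\cap P|\le 2\binom{n}{d-1}. \]
   Context: A set $P\subseteq\mathbb{R}^d$ of size $\binom{n}{d}$ is a grid set if there exist $n$ hyperplanes in $\mathbb{R}^d$ such that $P$ is exactly the set of points obtained as intersections of $d$ of these hyperplanes (each $d$-subset of the hyperplanes meeting in a single point, these points being distinct). $\partial C$ denotes the boundary of $C$ in $\mathbb{R}^d$. *)

theory Defs
  imports "HOL-Analysis.Analysis"
begin

definition affine_hyperplane :: "'a::euclidean_space set \<Rightarrow> bool" where
  "affine_hyperplane h \<longleftrightarrow> (\<exists>a b. a \<noteq> 0 \<and> h = {x. a \<bullet> x = b})"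

definition grid_set :: "nat \<Rightarrow> 'a::euclidean_space set \<Rightarrow> bool" where
  "grid_set n P \<longleftrightarrow>
     (\<exists>H. finite H \<and> card H = n \<and> (\<forall>h\<in>H. affine_hyperplane h) \<and>
        (\<forall>S. S \<subseteq> H \<and> card S = DIM('a) \<longrightarrow> (\<exists>p. \<Inter>S = {p})) \<and>
        inj_on Inter {S. S \<subseteq> H \<and> card S = DIM('a)} \<and>
        P = \<Union>{\<Inter>S | S. S \<subseteq> H \<and> card S = DIM('a)}) \<and>
     card P = n choose DIM('a)"

end

theory Submission
  imports Defs
begin

lemma two_point:
  fixes A :: "'a::euclidean_space set \<Rightarrow> 'a"
  assumes AB: "\<forall>g\<in>H. g = {x. A g \<bullet> x = B g}" and "T \<subseteq> H" "h \<in> H"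
    and s: "\<Inter>(insert h T) = {s}" and p: "p \<in> \<Inter>T" and q: "q \<in> \<Inter>T"
    and eq: "A h \<bullet> q = A h \<bullet> p"
  shows "q = p"
proof -
  have sT: "s \<in> \<Inter>T" and sh: "s \<in> h" using s by auto
  have "s + (q - p) \<in> \<Inter>(insert h T)"
  proof -
    have "s + (q - p) \<in> g" if g: "g \<in> T" for g
    proof -
      have gH: "g \<in> H" using g assms(2) by auto
      have "s \<in> g" "p \<in> g" "q \<in> g" using sT p q g by auto
      then have "A g \<bullet> s = B g" "A g \<bullet> p = B g" "A g \<bullet> q = B g" using AB gH by blast+
      then have "A g \<bullet> (s + (q - p)) = B g" by (simp add: inner_simps)
      then show ?thesis using AB gH by blast
    qed
    moreover have "s + (q - p) \<in> h"
    proof -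
      have "A h \<bullet> s = B h" using AB sh assms(3) by blast
      then have "A h \<bullet> (s + (q - p)) = B h" using eq by (simp add: inner_simps)
      then show ?thesis using AB assms(3) by blast
    qed
    ultimately show ?thesis by auto
  qed
  then have "s + (q - p) = s" by (metis s singletonD)
  then show ?thesis by (simp add: algebra_simps)
qed

lemma collinear3:
  fixes A :: "'a::euclidean_space set \<Rightarrow> 'a"
  assumes AB: "\<forall>g\<in>H. g = {x. A g \<bullet> x = B g}" and TH: "T \<subseteq> H" and hH: "h \<in> H"
    and s: "\<Inter>(insert h T) = {s}" and p: "p \<in> \<Inter>T" and q: "q \<in> \<Inter>T" and r: "r \<in> \<Inter>T"
    and pq: "p \<noteq> q"
  shows "\<exists>t. r - p = t *\<^sub>R (q - p)"
proof -
  define \<alpha> where "\<alpha> = A h \<bullet> (q - p)"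
  define \<beta> where "\<beta> = A h \<bullet> (r - p)"
  have a0: "\<alpha> \<noteq> 0"
  proof
    assume "\<alpha> = 0"
    then have "A h \<bullet> q = A h \<bullet> p" unfolding \<alpha>_def by (simp add: inner_simps)
    then have "q = p" using two_point[OF AB TH hH s p q] by blast
    then show False using pq by simp
  qed
  define c where "c = \<beta> / \<alpha>"
  define w where "w = r - c *\<^sub>R (q - p)"
  have "w \<in> \<Inter>T"
  proof -
    have "w \<in> g" if g: "g \<in> T" for g
    proof -
      have gH: "g \<in> H" using g TH by auto
      have "p \<in> g" "q \<in> g" "r \<in> g" using r p q g by auto
      then have "A g \<bullet> r = B g" "A g \<bullet> p = B g" "A g \<bullet> q = B g" using AB gH by blast+
      then have "A g \<bullet> w = B g" unfolding w_def by (simp add: inner_simps)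
      then show ?thesis using AB gH by blast
    qed
    then show ?thesis by auto
  qed
  moreover have "A h \<bullet> w = A h \<bullet> p"
  proof -
    have "A h \<bullet> w = A h \<bullet> r - c * \<alpha>" unfolding w_def \<alpha>_def by (simp add: inner_simps)
    also have "\<dots> = A h \<bullet> r - \<beta>" unfolding c_def using a0 by simp
    also have "\<dots> = A h \<bullet> p" unfolding \<beta>_def by (simp add: inner_simps)
    finally show ?thesis .
  qed
  ultimately have "w = p" using two_point[OF AB TH hH s p] by blast
  then show ?thesis unfolding w_def by (intro exI[of _ c]) (simp add: algebra_simps)
qed

lemma three_bad:
  fixes x y z :: "'a::real_vector"
  assumes "x \<noteq> y" "y \<noteq> z" "x \<noteq> z" and t: "z - x = t *\<^sub>R (y - x)"
  shows "x \<in> open_segment y z \<or> y \<in> open_segment x z \<or> z \<in> open_segment x y"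
proof -
  have zt: "z = x + t *\<^sub>R (y - x)" using t by (simp add: algebra_simps)
  have t0: "t \<noteq> 0" using assms(3) zt by auto
  have t1: "t \<noteq> 1" using assms(2) zt by auto
  consider "t < 0" | "0 < t \<and> t < 1" | "1 < t" using t0 t1 by linarith
  then show ?thesis
  proof cases
    case 1
    define u where "u = 1 / (1 - t)"
    have u: "0 < u" "u < 1" using 1 unfolding u_def by (auto simp: field_simps)
    have "(1 - u) *\<^sub>R y + u *\<^sub>R z = x"
    proof -
      have "(1 - u) *\<^sub>R y + u *\<^sub>R z = (1 - u) *\<^sub>R y + u *\<^sub>R x + (u * t) *\<^sub>R y - (u * t) *\<^sub>R x"
        unfolding zt by (simp add: algebra_simps)
      also have "\<dots> = ((1 - u) + u * t) *\<^sub>R y + (u - u * t) *\<^sub>R x" by (simp add: algebra_simps)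
      also have "(1 - u) + u * t = 0" using 1 unfolding u_def by (simp add: field_simps)
      also have "u - u * t = 1" using 1 unfolding u_def by (simp add: field_simps)
      finally show ?thesis by simp
    qed
    then show ?thesis using u assms by (auto simp: in_segment)
  next
    case 2
    have "z = (1 - t) *\<^sub>R x + t *\<^sub>R y" unfolding zt by (simp add: algebra_simps)
    then show ?thesis using 2 assms by (auto simp: in_segment)
  next
    case 3
    define u where "u = 1 / t"
    have u: "0 < u" "u < 1" using 3 unfolding u_def by (auto simp: field_simps)
    have "(1 - u) *\<^sub>R x + u *\<^sub>R z = y"
    proof -
      have "(1 - u) *\<^sub>R x + u *\<^sub>R z = x + (u * t) *\<^sub>R (y - x)"
        unfolding zt by (simp add: algebra_simps)
      also have "u * t = 1" using 3 unfolding u_def by simp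
      finally show ?thesis by simp
    qed
    then show ?thesis using u assms by (auto simp: in_segment)
  qed
qed

lemma card_le2:
  assumes "\<And>x y z. x \<in> E \<Longrightarrow> y \<in> E \<Longrightarrow> z \<in> E \<Longrightarrow> x \<noteq> y \<Longrightarrow> y \<noteq> z \<Longrightarrow> x \<noteq> z \<Longrightarrow> False"
  shows "card E \<le> 2"
proof (rule ccontr)
  assume "\<not> card E \<le> 2"
  then have "3 \<le> card E" by simp
  then obtain T where T: "T \<subseteq> E" "card T = 3" by (metis obtain_subset_with_card_n)
  then obtain x y z where "T = {x, y, z}" "x \<noteq> y" "y \<noteq> z" "x \<noteq> z" by (auto simp: card_3_iff)
  then show False using assms T(1) by blast
qed

lemma support:
  fixes C :: "'a::euclidean_space set"
  assumes "convex C" "closed C" "p \<in> frontier C"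
  shows "\<exists>a. a \<noteq> 0 \<and> (\<forall>y\<in>C. a \<bullet> p \<le> a \<bullet> y)"
proof (cases "interior C = {}")
  case True
  then obtain a b where "a \<noteq> 0" "C \<subseteq> {x. a \<bullet> x = b}" using empty_interior_subset_hyperplane assms(1) by metis
  moreover have "p \<in> C" using assms frontier_subset_closed by blast
  ultimately have "\<forall>y\<in>C. a \<bullet> p \<le> a \<bullet> y" by (metis (mono_tags, lifting) mem_Collect_eq order_refl subsetD)
  then show ?thesis using \<open>a \<noteq> 0\<close> by blast
next
  case False
  then have ri: "rel_interior C = interior C" by (rule rel_interior_nonempty_interior)
  have "p \<in> closure C" "p \<notin> rel_interior C" using assms ri by (auto simp: frontier_def)
  then obtain a where "a \<noteq> 0" "\<And>y. y \<in> closure C \<Longrightarrow> a \<bullet> p \<le> a \<bullet> y"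
    using supporting_hyperplane_relative_frontier assms(1) by metis
  then show ?thesis using closure_subset by blast
qed

lemma cover:
  fixes A :: "'a::euclidean_space set \<Rightarrow> 'a" and C :: "'a set"
  assumes AB: "\<forall>g\<in>H. g = {x. A g \<bullet> x = B g}"
    and SH: "S \<subseteq> H" and cS: "card S = DIM('a)" and Sp: "\<Inter>S = {p}"
    and C: "convex C" "closed C" "p \<in> frontier C"
    and nE: "\<forall>h\<in>S. \<exists>q\<in>\<Inter>(S-{h}) \<inter> C. \<exists>r\<in>\<Inter>(S-{h}) \<inter> C. p \<in> open_segment q r"
  shows False
proof -
  obtain a where a0: "a \<noteq> 0" and a: "\<forall>y\<in>C. a \<bullet> p \<le> a \<bullet> y" using support[OF C] by blast
  from nE obtain Q R where QR: "\<forall>h\<in>S. Q h \<in> \<Inter>(S-{h}) \<inter> C \<and> R h \<in> \<Inter>(S-{h}) \<inter> C \<and> p \<in> open_segment (Q h) (R h)"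
    by (metis (no_types, lifting) bchoice)
  have finS: "finite S" using cS by (metis DIM_positive card_ge_0_finite)
  define V where "V h = Q h - p" for h
  have pS: "p \<in> \<Inter>S" using Sp by simp
  have Vne: "V h \<noteq> 0" if "h \<in> S" for h
    using QR that unfolding V_def by (auto simp: open_segment_def)
  have aV: "a \<bullet> V h = 0" if h: "h \<in> S" for h
  proof -
    obtain u where u: "0 < u" "u < 1" "p = (1 - u) *\<^sub>R Q h + u *\<^sub>R R h"
      using QR h by (auto simp: in_segment)
    define x where "x = a \<bullet> Q h - a \<bullet> p"
    define y where "y = a \<bullet> R h - a \<bullet> p"
    have x: "x \<ge> 0" "y \<ge> 0" using a QR h unfolding x_def y_def by auto
    have "a \<bullet> p = (1 - u) * (a \<bullet> Q h) + u * (a \<bullet> R h)"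
      using u(3) by (metis inner_add_right inner_scaleR_right)
    then have eq: "(1 - u) * x + u * y = 0" unfolding x_def y_def by (simp add: algebra_simps)
    have "(1 - u) * x \<ge> 0" "u * y \<ge> 0" using x u by auto
    then have "(1 - u) * x = 0" using eq by linarith
    then have "x = 0" using u by simp
    then show ?thesis unfolding x_def V_def by (simp add: inner_diff_right)
  qed
  have AV0: "A g \<bullet> V h = 0" if "h \<in> S" "g \<in> S" "g \<noteq> h" for g h
  proof -
    have "Q h \<in> g" "p \<in> g" using QR pS that by auto
    moreover have "g \<in> H" using SH that by auto
    ultimately have "A g \<bullet> Q h = B g" "A g \<bullet> p = B g" using AB by blast+
    then show ?thesis unfolding V_def by (simp add: inner_diff_right)
  qed
  have AVh: "A h \<bullet> V h \<noteq> 0" if h: "h \<in> S" for h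
  proof
    assume "A h \<bullet> V h = 0"
    then have e: "A h \<bullet> Q h = A h \<bullet> p" unfolding V_def by (simp add: inner_diff_right)
    have ins: "\<Inter>(insert h (S - {h})) = {p}" using h Sp by (simp add: insert_absorb)
    have "p \<in> \<Inter>(S - {h})" using pS by auto
    moreover have "Q h \<in> \<Inter>(S - {h})" using QR h by auto
    ultimately have "Q h = p" using two_point[OF AB _ _ ins _ _ e] SH h by blast
    then show False using Vne[OF h] unfolding V_def by simp
  qed
  have inj: "inj_on V S"
  proof
    fix g h assume "g \<in> S" "h \<in> S" "V g = V h"
    show "g = h"
    proof (rule ccontr)
      assume "g \<noteq> h"
      then have "A g \<bullet> V h = 0" using AV0 \<open>g \<in> S\<close> \<open>h \<in> S\<close> by blast
      then have "A g \<bullet> V g = 0" using \<open>V g = V h\<close> by simp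
      then show False using AVh \<open>g \<in> S\<close> by blast
    qed
  qed
  have indep: "independent (V ` S)"
  proof (rule notI)
    assume "dependent (V ` S)"
    then obtain u where u: "\<exists>v\<in>V ` S. u v \<noteq> 0" "(\<Sum>v\<in>V ` S. u v *\<^sub>R v) = 0"
      unfolding dependent_finite[OF finite_imageI[OF finS]] by blast
    then obtain g where g: "g \<in> S" "u (V g) \<noteq> 0" by blast
    have "(\<Sum>h\<in>S. u (V h) *\<^sub>R V h) = 0" using u(2) by (simp add: sum.reindex[OF inj])
    then have "A g \<bullet> (\<Sum>h\<in>S. u (V h) *\<^sub>R V h) = 0" by simp
    then have "(\<Sum>h\<in>S. u (V h) * (A g \<bullet> V h)) = 0" by (simp add: inner_sum_right)
    moreover have "(\<Sum>h\<in>S. u (V h) * (A g \<bullet> V h)) = u (V g) * (A g \<bullet> V g)"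
    proof -
      have "(\<Sum>h\<in>S. u (V h) * (A g \<bullet> V h)) = u (V g) * (A g \<bullet> V g) + (\<Sum>h\<in>S - {g}. u (V h) * (A g \<bullet> V h))"
        using sum.remove[OF finS g(1)] by blast
      also have "(\<Sum>h\<in>S - {g}. u (V h) * (A g \<bullet> V h)) = 0"
        using AV0 g(1) by (intro sum.neutral) auto
      finally show ?thesis by simp
    qed
    ultimately show False using g AVh by simp
  qed
  have "card (V ` S) = DIM('a)" using card_image[OF inj] cS by simp
  then have "UNIV \<subseteq> span (V ` S)"
    using card_ge_dim_independent[of "V ` S" UNIV] indep by simp
  then have aspan: "a \<in> span (V ` S)" by blast
  have "\<And>y. y \<in> V ` S \<Longrightarrow> orthogonal a y" using aV by (auto simp: orthogonal_def)
  then have "orthogonal a a" using orthogonal_to_span[OF aspan] by blast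
  then show False using a0 by (simp add: orthogonal_def)
qed

theorem lemma8:
  fixes P C :: "'a::euclidean_space set" and n :: nat
  assumes "DIM('a) \<le> n"
    and "grid_set n P"
    and "compact C" and "convex C"
  shows "card (frontier C \<inter> P) \<le> 2 * (n choose (DIM('a) - 1))"
proof -
  obtain H where H: "finite H" "card H = n" "\<forall>h\<in>H. affine_hyperplane h"
    "\<forall>S. S \<subseteq> H \<and> card S = DIM('a) \<longrightarrow> (\<exists>p. \<Inter>S = {p})"
    and Peq: "P = \<Union>{\<Inter>S | S. S \<subseteq> H \<and> card S = DIM('a)}"
    and cP: "card P = n choose DIM('a)"
    using assms(2) unfolding grid_set_def by blast
  have "\<forall>g\<in>H. \<exists>ab. g = {x. fst ab \<bullet> x = snd ab}"
    using H(3) unfolding affine_hyperplane_def by force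
  then obtain f where f: "\<forall>g\<in>H. g = {x. fst (f g) \<bullet> x = snd (f g)}" by (metis bchoice)
  define A where "A g = fst (f g)" for g
  define B where "B g = snd (f g)" for g
  have AB: "\<forall>g\<in>H. g = {x. A g \<bullet> x = B g}" using f unfolding A_def B_def by blast
  have "card P > 0" using cP zero_less_binomial[OF assms(1)] by simp
  then have finP: "finite P" using card_ge_0_finite by blast
  have closedC: "closed C" using assms(3) compact_imp_closed by blast
  define X where "X T = \<Inter>T \<inter> C \<inter> P" for T
  define E where "E T = {p \<in> X T. \<forall>q\<in>X T. \<forall>r\<in>X T. p \<notin> open_segment q r}" for T
  define TT where "TT = {T. T \<subseteq> H \<and> card T = DIM('a) - 1}"
  have cT: "card TT = n choose (DIM('a) - 1)" unfolding TT_def using n_subsets[OF H(1)] H(2) by simp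
  have finT: "finite TT" unfolding TT_def using H(1) by (auto intro: rev_finite_subset[of "Pow H"])
  have E2: "card (E T) \<le> 2" if T: "T \<in> TT" for T
  proof -
    have TH: "T \<subseteq> H" and cardT: "card T = DIM('a) - 1" using T unfolding TT_def by auto
    have "card T < card H" using cardT H(2) assms(1) DIM_positive[where 'a='a] by linarith
    have finTT: "finite T" using finite_subset[OF TH H(1)] .
    have "\<not> H \<subseteq> T"
    proof
      assume "H \<subseteq> T"
      then have "card H \<le> card T" using card_mono[OF finTT] by blast
      then show False using \<open>card T < card H\<close> by linarith
    qed
    then obtain h where hH: "h \<in> H" and hT: "h \<notin> T" by blast
    have "card (insert h T) = DIM('a)" using card_insert_disjoint[OF finTT hT] cardT DIM_positive[where 'a='a] by simp
    moreover have "insert h T \<subseteq> H" using TH hH by blast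
    ultimately have "insert h T \<subseteq> H \<and> card (insert h T) = DIM('a)" by blast
    then have "\<exists>s. \<Inter>(insert h T) = {s}" by (rule H(4)[rule_format])
    then obtain s where s: "\<Inter>(insert h T) = {s}" by blast
    show ?thesis
    proof (rule card_le2)
      fix x y z assume xyz: "x \<in> E T" "y \<in> E T" "z \<in> E T" "x \<noteq> y" "y \<noteq> z" "x \<noteq> z"
      then have X3: "x \<in> X T" "y \<in> X T" "z \<in> X T" unfolding E_def by auto
      then have "x \<in> \<Inter>T" "y \<in> \<Inter>T" "z \<in> \<Inter>T" unfolding X_def by auto
      then obtain t where "z - x = t *\<^sub>R (y - x)" using collinear3[OF AB TH hH s] xyz(4) by blast
      then have "x \<in> open_segment y z \<or> y \<in> open_segment x z \<or> z \<in> open_segment x y"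
        using three_bad xyz(4-6) by blast
      then show False using xyz(1-3) X3 unfolding E_def by blast
    qed
  qed
  have cover: "frontier C \<inter> P \<subseteq> (\<Union>T\<in>TT. E T)"
  proof
    fix p assume p: "p \<in> frontier C \<inter> P"
    then obtain S where SH: "S \<subseteq> H" and cS: "card S = DIM('a)" and pS: "p \<in> \<Inter>S"
      using Peq by blast
    have "\<exists>p'. \<Inter>S = {p'}" using SH cS by (intro H(4)[rule_format] conjI)
    then obtain p' where "\<Inter>S = {p'}" by blast
    then have Sp: "\<Inter>S = {p}" using pS by simp
    have pC: "p \<in> C" using p closedC frontier_subset_closed by blast
    show "p \<in> (\<Union>T\<in>TT. E T)"
    proof (rule ccontr)
      assume np: "p \<notin> (\<Union>T\<in>TT. E T)"
      have "\<forall>h\<in>S. \<exists>q\<in>\<Inter>(S-{h}) \<inter> C. \<exists>r\<in>\<Inter>(S-{h}) \<inter> C. p \<in> open_segment q r"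
      proof
        fix h assume h: "h \<in> S"
        have finS: "finite S" using finite_subset[OF SH H(1)] .
        have "S - {h} \<in> TT" unfolding TT_def using SH cS h finS by auto
        then have "p \<notin> E (S - {h})" using np by blast
        moreover have "p \<in> X (S - {h})" unfolding X_def using pS pC p by auto
        ultimately obtain q r where "q \<in> X (S - {h})" "r \<in> X (S - {h})" "p \<in> open_segment q r"
          unfolding E_def by blast
        then show "\<exists>q\<in>\<Inter>(S-{h}) \<inter> C. \<exists>r\<in>\<Inter>(S-{h}) \<inter> C. p \<in> open_segment q r"
          unfolding X_def by blast
      qed
      then show False using cover[OF AB SH cS Sp assms(4) closedC] p by blast
    qed
  qed
  have finU: "finite (\<Union>T\<in>TT. E T)"
    by (rule finite_subset[OF _ finP]) (auto simp: E_def X_def)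
  have "card (frontier C \<inter> P) \<le> card (\<Union>T\<in>TT. E T)" by (rule card_mono[OF finU cover])
  also have "\<dots> \<le> (\<Sum>T\<in>TT. card (E T))" by (rule card_UN_le[OF finT])
  also have "\<dots> \<le> (\<Sum>T\<in>TT. 2)" by (rule sum_mono) (rule E2)
  also have "\<dots> = 2 * (n choose (DIM('a) - 1))" using cT by simp
  finally show ?thesis .
qed

end
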